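(* Let $\mathcal L_D=\mathcal L(0,\{D_k\})$ be a purely dissipative Lindblad generator on finite-dimensional $\mathcal H$ such that the pure state $\rho_d$ is conditionally asymptotically stable relative to a subspace $\mathcal H''$. Then there exists a subspace $\mathcal H'\supseteq\mathcal H''$ such that $\mathfrak D(\mathcal H')$ is invariant under $e^{\mathcal L_Dt}$ for all $t\ge0$ and $\rho_d$ is conditionally asymptotically stable relative to $\mathcal H'$ for $\mathcal L_D$. (Explicitly, one may take $\mathcal H'$ to be the smallest subspace containing $\mathrm{supp}(e^{\mathcal L_Dt}(\rho_0))$ for all $t\ge0$ and all $\rho_0\in\mathfrak D(\mathcal H'')$.)
   Context: $\mathfrak D(\mathcal K)$ denotes the set of density operators with support contained in the subspace $\mathcal K$. $\mathcal L(0,\{D_k\})(\rho)=\sum_k(D_k\rho D_k^\dagger-\frac12\{D_k^\dagger D_k,\rho\})$. Conditional asymptotic stability relative to $\mathcal K$: $e^{\mathcal L_Dt}(\rho_0)\to\rho_d$ as $t\to\infty$ for all $\rho_0\in\mathfrak D(\mathcal K)$. *)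

theory Defs
  imports "HOL-Analysis.Analysis"
begin

text \<open>Operators on the finite-dimensional Hilbert space H = complex^'n are
  complex matrices of type complex^'n^'n.\<close>

type_synonym 'n cmat = "complex^'n^'n"

definition adjoint :: "'n::finite cmat \<Rightarrow> 'n cmat" where
  "adjoint A = (\<chi> i j. cnj (A $ j $ i))"

definition cinner :: "complex^'n::finite \<Rightarrow> complex^'n \<Rightarrow> complex" where
  "cinner x y = (\<Sum>i\<in>UNIV. cnj (x $ i) * y $ i)"

definition csubspace :: "(complex^'n::finite) set \<Rightarrow> bool" where
  "csubspace K \<longleftrightarrow> 0 \<in> K \<and> (\<forall>x\<in>K. \<forall>y\<in>K. x + y \<in> K) \<and> (\<forall>c. \<forall>x\<in>K. c *s x \<in> K)"

definition psd :: "'n::finite cmat \<Rightarrow> bool" where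
  "psd A \<longleftrightarrow> (\<forall>x. Im (cinner x (A *v x)) = 0 \<and> Re (cinner x (A *v x)) \<ge> 0)"

definition density :: "'n::finite cmat \<Rightarrow> bool" where
  "density \<rho> \<longleftrightarrow> psd \<rho> \<and> trace \<rho> = 1"

text \<open>Support of an operator (for Hermitian operators, the range).\<close>
definition supp :: "'n::finite cmat \<Rightarrow> (complex^'n) set" where
  "supp A = range (\<lambda>x. A *v x)"

definition densities :: "(complex^'n::finite) set \<Rightarrow> 'n cmat set" where
  "densities K = {\<rho>. density \<rho> \<and> supp \<rho> \<subseteq> K}"

definition outer :: "complex^'n::finite \<Rightarrow> complex^'n \<Rightarrow> 'n cmat" where
  "outer x y = (\<chi> i j. x $ i * cnj (y $ j))"

definition pure_state :: "'n::finite cmat \<Rightarrow> bool" where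
  "pure_state \<rho> \<longleftrightarrow> (\<exists>\<psi>. cinner \<psi> \<psi> = 1 \<and> \<rho> = outer \<psi> \<psi>)"

definition lindblad_D :: "'n::finite cmat list \<Rightarrow> 'n cmat \<Rightarrow> 'n cmat" where
  "lindblad_D Ds \<rho> = (\<Sum>D\<leftarrow>Ds. D ** \<rho> ** adjoint D
      - (1/2::real) *\<^sub>R ((adjoint D ** D) ** \<rho> + \<rho> ** (adjoint D ** D)))"

definition evol :: "('n::finite cmat \<Rightarrow> 'n cmat) \<Rightarrow> real \<Rightarrow> 'n cmat \<Rightarrow> 'n cmat" where
  "evol L t \<rho> = (\<Sum>k. (t ^ k / fact k) *\<^sub>R (L ^^ k) \<rho>)"

definition cond_asymp_stable :: "('n::finite cmat \<Rightarrow> 'n cmat) \<Rightarrow> 'n cmat \<Rightarrow> (complex^'n) set \<Rightarrow> bool" where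
  "cond_asymp_stable L \<rho>d K \<longleftrightarrow>
     (\<forall>\<rho>0 \<in> densities K. ((\<lambda>t. evol L t \<rho>0) \<longlongrightarrow> \<rho>d) at_top)"

definition invariant_densities :: "('n::finite cmat \<Rightarrow> 'n cmat) \<Rightarrow> (complex^'n) set \<Rightarrow> bool" where
  "invariant_densities L K \<longleftrightarrow> (\<forall>\<rho>\<in>densities K. \<forall>t\<ge>0. evol L t \<rho> \<in> densities K)"

end

theory Submission
  imports Defs
begin


typedef (overloaded) 'a sop = "UNIV :: ('a::euclidean_space \<Rightarrow>\<^sub>L 'a) set"
  morphisms sop_rep sop_abs by auto

setup_lifting type_definition_sop

instantiation sop :: (euclidean_space) real_normed_vector
begin
lift_definition norm_sop :: "'a sop \<Rightarrow> real" is norm .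
lift_definition minus_sop :: "'a sop \<Rightarrow> 'a sop \<Rightarrow> 'a sop" is "(-)" .
lift_definition plus_sop :: "'a sop \<Rightarrow> 'a sop \<Rightarrow> 'a sop" is "(+)" .
lift_definition uminus_sop :: "'a sop \<Rightarrow> 'a sop" is "uminus" .
lift_definition zero_sop :: "'a sop" is "0" .
lift_definition scaleR_sop :: "real \<Rightarrow> 'a sop \<Rightarrow> 'a sop" is "scaleR" .
definition dist_sop :: "'a sop \<Rightarrow> 'a sop \<Rightarrow> real" where "dist_sop a b = norm (a - b)"
definition [code del]:
  "(uniformity :: ('a sop \<times> 'a sop) filter) = (INF e\<in>{0 <..}. principal {(x, y). dist x y < e})"
definition open_sop :: "'a sop set \<Rightarrow> bool"
  where [code del]: "open_sop S = (\<forall>x\<in>S. \<forall>\<^sub>F (x', y) in uniformity. x' = x \<longrightarrow> y \<in> S)"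
definition sgn_sop :: "'a sop \<Rightarrow> 'a sop" where "sgn_sop x = scaleR (inverse (norm x)) x"
instance
  apply standard
  unfolding dist_sop_def open_sop_def sgn_sop_def uniformity_sop_def
  apply (rule refl | (transfer, force simp: norm_triangle_ineq algebra_simps))+
  done
end

instantiation sop :: (euclidean_space) real_normed_algebra_1
begin
lift_definition times_sop :: "'a sop \<Rightarrow> 'a sop \<Rightarrow> 'a sop" is "blinfun_compose" .
lift_definition one_sop :: "'a sop" is "id_blinfun" .
instance
proof standard
  show "(0::'a sop) \<noteq> 1"
  proof transfer
    obtain b :: 'a where "b \<in> Basis" using nonempty_Basis by blast
    then have "b \<noteq> 0" by auto
    then show "(0::'a \<Rightarrow>\<^sub>L 'a) \<noteq> id_blinfun"
      by (metis blinfun_apply_id_blinfun blinfun.zero_left)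
  qed
qed (transfer; auto intro!: blinfun_eqI simp: blinfun.bilinear_simps norm_blinfun_compose)+
end


lemma norm_sop_rep: "norm x = norm (sop_rep x)" by transfer simp
lemma sop_rep_diff: "sop_rep (x - y) = sop_rep x - sop_rep y" by transfer simp

instance sop :: (euclidean_space) banach
proof
  fix X :: "nat \<Rightarrow> 'a sop" assume "Cauchy X"
  then have "Cauchy (\<lambda>n. sop_rep (X n))"
    unfolding Cauchy_def dist_sop_def dist_norm norm_sop_rep sop_rep_diff .
  then obtain l where l: "(\<lambda>n. sop_rep (X n)) \<longlonglongrightarrow> l"
    using convergent_def Cauchy_convergent_iff by blast
  have "X \<longlonglongrightarrow> sop_abs l"
    using l unfolding LIMSEQ_iff norm_sop_rep sop_rep_diff
    by (simp add: sop_abs_inverse)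
  then show "convergent X" by (auto simp: convergent_def)
qed


section \<open>Exponential limit in Banach algebras\<close>

lemma exp_real_series: "exp (r::real) = (\<Sum>n. r^n / fact n)"
  by (simp add: exp_def divide_inverse mult.commute)

lemma summable_exp_real: "summable (\<lambda>n. (r::real)^n / fact n)"
  using summable_exp_generic[of r] by (simp add: divide_inverse mult.commute)

lemma pow_diff_bound:
  fixes X Y :: "'a::real_normed_algebra_1"
  assumes "norm X \<le> M" "norm Y \<le> M" "1 \<le> M"
  shows "norm (X^n - Y^n) \<le> real n * M^n * norm (X - Y)"
proof (induction n)
  case 0 then show ?case by simp
next
  case (Suc n)
  have eq: "X^Suc n - Y^Suc n = X * (X^n - Y^n) + (X - Y) * Y^n"
    by (simp add: algebra_simps)
  have "norm (X * (X^n - Y^n)) \<le> M * (real n * M^n * norm (X - Y))"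
    using norm_mult_ineq[of X "X^n - Y^n"] Suc assms
    by (meson mult_mono norm_ge_zero order_trans)
  moreover have "norm ((X - Y) * Y^n) \<le> norm (X - Y) * M^n"
  proof -
    have "norm (Y^n) \<le> M^n"
      using norm_power_ineq[of Y n] power_mono[OF assms(2) norm_ge_zero, of n] by linarith
    then show ?thesis using norm_mult_ineq[of "X - Y" "Y^n"]
      by (meson mult_left_mono norm_ge_zero order_trans)
  qed
  moreover have "M^n \<le> M^Suc n" using assms(3) by simp
  ultimately have "norm (X^Suc n - Y^Suc n) \<le> M * (real n * M^n * norm (X - Y)) + norm (X - Y) * M^Suc n"
    unfolding eq using norm_triangle_ineq[of "X * (X^n - Y^n)" "(X - Y) * Y^n"]
    by (smt (verit) mult_left_mono norm_ge_zero)
  also have "\<dots> = real (Suc n) * M^Suc n * norm (X - Y)"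
    by (simp add: algebra_simps)
  finally show ?case .
qed

lemma exp_remainder_bound:
  fixes b :: "'a::{real_normed_algebra_1,banach}"
  shows "norm (exp b - 1 - b) \<le> norm b ^ 2 * exp (norm b)"
proof -
  define f where "f n = inverse (fact (n + 2)) *\<^sub>R (b ^ (n + 2))" for n
  define g where "g n = norm b ^ 2 * (norm b ^ n / fact n)" for n
  have eq: "exp b - 1 - b = suminf f"
    using exp_first_two_terms[of b] unfolding f_def by simp
  have fg: "norm (f n) \<le> g n" for n
  proof -
    have "norm (f n) \<le> inverse (fact (n+2)) * norm b ^ (n+2)"
      unfolding f_def using norm_power_ineq[of b "n+2"]
      by (simp add: mult_left_mono)
    also have "\<dots> \<le> inverse (fact n) * norm b ^ (n+2)"
    proof -
      have "fact n \<le> (fact (n+2)::real)" by (rule fact_mono) simp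
      then show ?thesis by (intro mult_right_mono le_imp_inverse_le) auto
    qed
    also have "\<dots> = g n" unfolding g_def by (simp add: power_add field_simps power2_eq_square)
    finally show ?thesis .
  qed
  have sg: "summable g" unfolding g_def
    by (intro summable_mult) (rule summable_exp_real)
  have sf: "summable (\<lambda>n. norm (f n))"
    by (rule summable_comparison_test[OF _ sg]) (use fg in auto)
  have "norm (suminf f) \<le> (\<Sum>n. norm (f n))" by (rule summable_norm[OF sf])
  also have "\<dots> \<le> suminf g" by (rule suminf_le[OF fg sf sg])
  also have "suminf g = norm b ^ 2 * exp (norm b)"
    unfolding g_def exp_real_series[of "norm b"] by (rule suminf_mult) (rule summable_exp_real)
  finally show ?thesis using eq by simp
qed

lemma exp_scaleR_nat:
  fixes x :: "'a::{real_normed_algebra_1,banach}"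
  shows "exp (real n *\<^sub>R x) = exp x ^ n"
proof (induction n)
  case 0 then show ?case by simp
next
  case (Suc n)
  have "exp (real (Suc n) *\<^sub>R x) = exp (x + real n *\<^sub>R x)"
    by (simp add: algebra_simps)
  also have "\<dots> = exp x * exp (real n *\<^sub>R x)"
    by (rule exp_add_commuting) (simp add: algebra_simps)
  finally show ?case using Suc by simp
qed

lemma exp_lipschitz:
  fixes x y :: "'a::{real_normed_algebra_1,banach}"
  shows "norm (exp y - exp x) \<le> norm (y - x) * exp (2 * (1 + norm x + norm y))"
proof -
  define M where "M = 1 + norm x + norm y"
  define f where "f n = (y^n - x^n) /\<^sub>R fact n" for n
  define g where "g n = norm (y - x) * ((2*M)^n / fact n)" for n
  have eq: "exp y - exp x = suminf f"
    unfolding exp_def f_def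
    by (simp add: suminf_diff[OF summable_exp_generic summable_exp_generic, symmetric] scaleR_diff_right)
  have fg: "norm (f n) \<le> g n" for n
  proof -
    have "norm (y^n - x^n) \<le> real n * M^n * norm (y - x)"
      by (rule pow_diff_bound) (auto simp: M_def)
    also have "\<dots> \<le> 2^n * M^n * norm (y - x)"
    proof -
      have "real n \<le> 2^n" using less_exp[of n] by (metis of_nat_le_iff of_nat_numeral of_nat_power less_imp_le)
      then show ?thesis by (intro mult_right_mono) (auto simp: M_def)
    qed
    finally have "norm (y^n - x^n) \<le> norm (y - x) * (2*M)^n"
      by (simp add: power_mult_distrib algebra_simps)
    then show ?thesis unfolding f_def g_def
      by (simp add: divide_right_mono inverse_eq_divide mult.commute[of "inverse _"] power_mult_distrib)
  qed
  have sg: "summable g" unfolding g_def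
    by (intro summable_mult) (rule summable_exp_real)
  have sf: "summable (\<lambda>n. norm (f n))"
    by (rule summable_comparison_test[OF _ sg]) (use fg in auto)
  have "norm (suminf f) \<le> (\<Sum>n. norm (f n))" by (rule summable_norm[OF sf])
  also have "\<dots> \<le> suminf g" by (rule suminf_le[OF fg sf sg])
  also have "suminf g = norm (y - x) * exp (2 * M)"
    unfolding g_def exp_real_series[of "2*M"] by (rule suminf_mult) (rule summable_exp_real)
  finally show ?thesis using eq M_def by simp
qed

lemma exp_limit_seq:
  fixes a :: "nat \<Rightarrow> 'a::{real_normed_algebra_1,banach}"
  assumes lim: "a \<longlonglongrightarrow> A"
  shows "(\<lambda>n. (1 + a n /\<^sub>R real n)^n) \<longlonglongrightarrow> exp A"
proof -
  obtain C where C: "C > 0" "\<And>n. norm (a n) \<le> C"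
    using convergent_imp_Bseq[of a] lim BseqE convergent_def by metis
  have e: "(\<lambda>n. exp (a n)) \<longlonglongrightarrow> exp A"
  proof -
    have "(\<lambda>n. exp (a n) - exp A) \<longlonglongrightarrow> 0"
    proof (rule Lim_null_comparison)
      show "\<forall>\<^sub>F n in sequentially. norm (exp (a n) - exp A) \<le> norm (a n - A) * exp (2 * (1 + norm A + C))"
      proof (intro always_eventually allI)
        fix n
        have "norm (exp (a n) - exp A) \<le> norm (a n - A) * exp (2 * (1 + norm A + norm (a n)))"
          by (rule exp_lipschitz)
        also have "\<dots> \<le> norm (a n - A) * exp (2 * (1 + norm A + C))"
          using C(2)[of n] by (intro mult_left_mono) auto
        finally show "norm (exp (a n) - exp A) \<le> norm (a n - A) * exp (2 * (1 + norm A + C))" .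
      qed
      have "(\<lambda>n. norm (a n - A)) \<longlonglongrightarrow> 0"
        using lim by (simp add: tendsto_norm_zero_iff LIM_zero)
      then show "(\<lambda>n. norm (a n - A) * exp (2 * (1 + norm A + C))) \<longlonglongrightarrow> 0"
        by (simp add: tendsto_mult_left_zero)
    qed
    then show ?thesis by (simp add: LIM_zero_iff)
  qed
  define K where "K = C^2 * exp (2 * C)"
  have bnd: "norm ((1 + a n /\<^sub>R real n)^n - exp (a n)) \<le> K / real n" if n: "n > 0" for n
  proof -
    define b where "b = a n /\<^sub>R real n"
    define M where "M = exp (norm b)"
    have nb: "norm b = norm (a n) / real n" unfolding b_def using n by (simp add: divide_inverse mult.commute)
    have M1: "1 \<le> M" unfolding M_def by simp
    have n1: "norm (1 + b) \<le> M"
      using norm_triangle_ineq[of 1 b] exp_ge_add_one_self[of "norm b"] unfolding M_def by (simp del: exp_ge_add_one_self)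
    have n2: "norm (exp b) \<le> M" unfolding M_def by (rule norm_exp)
    have ea: "exp (a n) = exp b ^ n"
      using exp_scaleR_nat[of n b] n unfolding b_def by simp
    have pd: "norm ((1 + b)^n - exp b ^ n) \<le> real n * M^n * norm (1 + b - exp b)"
      by (rule pow_diff_bound[OF n1 n2 M1])
    have "norm (1 + b - exp b) = norm (exp b - 1 - b)"
    proof -
      have "1 + b - exp b = - (exp b - 1 - b)" by (simp add: algebra_simps)
      then show ?thesis by (simp only: norm_minus_cancel)
    qed
    also have "\<dots> \<le> norm b ^ 2 * M" unfolding M_def by (rule exp_remainder_bound)
    finally have h: "norm (1 + b - exp b) \<le> norm b ^ 2 * M" .
    have k0: "0 \<le> real n * M^n" using M1 by simp
    from order_trans[OF pd mult_left_mono[OF h k0]]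
    have 1: "norm ((1 + b)^n - exp b ^ n) \<le> real n * M^n * (norm b ^ 2 * M)" .
    have Mn: "M^n = exp (norm (a n))"
    proof -
      have "M^n = exp (real n * norm b)" unfolding M_def by (rule exp_of_nat_mult[symmetric])
      also have "real n * norm b = norm (a n)" unfolding nb using n by simp
      finally show ?thesis .
    qed
    have "norm (a n) / real n \<le> C"
    proof -
      have n1': "1 \<le> real n" using n by simp
      have "C \<le> C * real n" using mult_left_mono[OF n1', of C] C by simp
      then have "norm (a n) \<le> C * real n" by (rule order_trans[OF C(2)])
      then show ?thesis using n by (simp add: divide_le_eq)
    qed
    then have Me: "M \<le> exp C" unfolding M_def nb exp_le_cancel_iff .
    have Mne: "M^n \<le> exp C" unfolding Mn exp_le_cancel_iff by (rule C(2))
    have "M^n * M \<le> exp C * exp C"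
      by (rule mult_mono[OF Mne Me]) (use M1 in auto)
    also have "exp C * exp C = exp (2*C)" by (simp only: mult_2 exp_add)
    finally have MM: "M^n * M \<le> exp (2*C)" .
    have "real n * M^n * (norm b ^ 2 * M) = (norm (a n))^2 / real n * (M^n * M)"
      unfolding nb using n by (simp add: power2_eq_square field_simps)
    also have "\<dots> \<le> C^2 / real n * exp (2*C)"
    proof (rule mult_mono)
      show "(norm (a n))^2 / real n \<le> C^2 / real n"
        using C(2)[of n] n by (intro divide_right_mono power_mono) auto
      show "M^n * M \<le> exp (2*C)" by (rule MM)
      show "0 \<le> C^2 / real n" by simp
      show "0 \<le> M^n * M" using M1 by simp
    qed
    also have "\<dots> = K / real n" unfolding K_def by simp
    finally have 2: "real n * M^n * (norm b ^ 2 * M) \<le> K / real n" .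
    have "norm ((1 + b)^n - exp (a n)) \<le> K / real n"
      unfolding ea using order_trans[OF 1 2] .
    then show ?thesis by (simp only: b_def)
  qed
  have "(\<lambda>n. (1 + a n /\<^sub>R real n)^n - exp (a n)) \<longlonglongrightarrow> 0"
  proof (rule Lim_null_comparison)
    show "\<forall>\<^sub>F n in sequentially. norm ((1 + a n /\<^sub>R real n)^n - exp (a n)) \<le> K / real n"
      using eventually_gt_at_top[of 0] by (rule eventually_mono) (rule bnd)
    show "(\<lambda>n. K / real n) \<longlonglongrightarrow> 0"
      by (rule lim_const_over_n)
  qed
  from tendsto_add[OF this e] show ?thesis by simp
qed



lemma csc: "r *\<^sub>R (z::complex) = complex_of_real r * z"
  by (simp add: scaleR_conv_of_real)

lemma mat_mult_scaleR_left: "(r *\<^sub>R (A::'n::finite cmat)) ** B = r *\<^sub>R (A ** B)"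
  by (simp add: vec_eq_iff matrix_matrix_mult_def sum_distrib_left vector_scaleR_component csc mult.assoc)

lemma mat_mult_scaleR_right: "(A::'n::finite cmat) ** (r *\<^sub>R B) = r *\<^sub>R (A ** B)"
  by (simp add: vec_eq_iff matrix_matrix_mult_def sum_distrib_left vector_scaleR_component csc mult.left_commute)

lemma mat_add_rdistrib: "((A::'n::finite cmat) + B) ** C = A ** C + B ** C"
  by (simp add: vec_eq_iff matrix_matrix_mult_def sum.distrib distrib_right)

lemma mat_diff_rdistrib: "((A::'n::finite cmat) - B) ** C = A ** C - B ** C"
  by (simp add: vec_eq_iff matrix_matrix_mult_def sum_subtractf left_diff_distrib)

lemma mat_diff_ldistrib: "(A::'n::finite cmat) ** (B - C) = A ** B - A ** C"
  by (simp add: vec_eq_iff matrix_matrix_mult_def sum_subtractf right_diff_distrib)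

lemma mat_scaleR_mv: "(r *\<^sub>R (A::'n::finite cmat)) *v x = r *\<^sub>R (A *v x)"
  by (simp add: vec_eq_iff matrix_vector_mult_def sum_distrib_left vector_scaleR_component csc mult.assoc)

lemma mat_mv_scaleR: "(A::'n::finite cmat) *v (r *\<^sub>R x) = r *\<^sub>R (A *v x)"
  by (simp add: vec_eq_iff matrix_vector_mult_def sum_distrib_left vector_scaleR_component csc mult.left_commute)

lemma mat_mv_smult: "(A::'n::finite cmat) *v (c *s x) = c *s (A *v x)"
  by (simp add: vec_eq_iff matrix_vector_mult_def sum_distrib_left mult.left_commute)

lemma adjoint_mult: "adjoint ((A::'n::finite cmat) ** B) = adjoint B ** adjoint A"
  by (simp add: vec_eq_iff adjoint_def matrix_matrix_mult_def mult.commute)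

lemma adjoint_adjoint[simp]: "adjoint (adjoint (A::'n::finite cmat)) = A"
  by (simp add: vec_eq_iff adjoint_def)

lemma adjoint_add: "adjoint ((A::'n::finite cmat) + B) = adjoint A + adjoint B"
  by (simp add: vec_eq_iff adjoint_def)

lemma adjoint_scaleR: "adjoint (r *\<^sub>R (A::'n::finite cmat)) = r *\<^sub>R adjoint A"
  by (simp add: vec_eq_iff adjoint_def vector_scaleR_component csc)

lemma adjoint_mat1[simp]: "adjoint (mat 1 :: 'n::finite cmat) = mat 1"
  by (simp add: vec_eq_iff adjoint_def mat_def)

lemma cinner_add_right: "cinner x (y + z) = cinner x y + cinner x z"
  by (simp add: cinner_def sum.distrib distrib_left)
lemma cinner_add_left: "cinner (x + y) z = cinner x z + cinner y z"
  by (simp add: cinner_def sum.distrib distrib_right)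
lemma cinner_diff_right: "cinner x (y - z) = cinner x y - cinner x z"
  by (simp add: cinner_def sum_subtractf right_diff_distrib)
lemma cinner_diff_left: "cinner (x - y) z = cinner x z - cinner y z"
  by (simp add: cinner_def sum_subtractf left_diff_distrib)
lemma cinner_smult_right: "cinner x (c *s y) = c * cinner x y"
  by (simp add: cinner_def sum_distrib_left mult.left_commute)
lemma cinner_smult_left: "cinner (c *s x) y = cnj c * cinner x y"
  by (simp add: cinner_def sum_distrib_left mult.assoc)
lemma cinner_scaleR_right: "cinner x (r *\<^sub>R y) = of_real r * cinner x y"
  by (simp add: cinner_def sum_distrib_left vector_scaleR_component csc mult.left_commute)
lemma cinner_scaleR_left: "cinner (r *\<^sub>R x) y = of_real r * cinner x y"
  by (simp add: cinner_def sum_distrib_left vector_scaleR_component csc mult.assoc)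
lemma cinner_zero_right[simp]: "cinner x 0 = 0" by (simp add: cinner_def)
lemma cinner_zero_left[simp]: "cinner 0 x = 0" by (simp add: cinner_def)
lemma cinner_cnj: "cnj (cinner x y) = cinner y x"
  by (simp add: cinner_def mult.commute)
lemma cinner_adjoint: "cinner x ((A::'n::finite cmat) *v y) = cinner (adjoint A *v x) y"
proof -
  have "cinner x (A *v y) = (\<Sum>i\<in>UNIV. \<Sum>j\<in>UNIV. cnj (x$i) * (A$i$j * y$j))"
    by (simp add: cinner_def matrix_vector_mult_def sum_distrib_left)
  also have "\<dots> = (\<Sum>j\<in>UNIV. \<Sum>i\<in>UNIV. cnj (x$i) * (A$i$j * y$j))"
    by (rule sum.swap)
  also have "\<dots> = cinner (adjoint A *v x) y"
    by (simp add: cinner_def adjoint_def matrix_vector_mult_def sum_distrib_right sum_distrib_left mult_ac)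
  finally show ?thesis .
qed

lemma cinner_self: "cinner x x = of_real ((norm x)^2)"
proof -
  have "(norm x)^2 = (\<Sum>i\<in>UNIV. (norm (x$i))^2)"
    by (simp add: norm_vec_def L2_set_def sum_nonneg)
  then show ?thesis
    by (simp add: cinner_def mult.commute complex_norm_square[symmetric])
qed

lemma inner_cinner: "inner x y = Re (cinner x (y::complex^'n::finite))"
  by (simp add: inner_vec_def cinner_def inner_complex_def Re_sum)

lemma cinner_eq_zero_iff[simp]: "cinner x x = 0 \<longleftrightarrow> x = 0"
  by (simp add: cinner_self)


section \<open>Positive semidefinite matrices\<close>

lemma cnj_mult_self: "cnj c * c = complex_of_real ((cmod c)^2)"
  by (metis complex_norm_square mult.commute)

lemma q_expand:
  "cinner (x + c *s y) ((A::'n::finite cmat) *v (x + c *s y)) =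
     cinner x (A *v x) + c * cinner x (A *v y) + cnj c * cinner y (A *v x)
     + (cnj c * c) * cinner y (A *v y)"
  by (simp add: matrix_vector_right_distrib mat_mv_smult cinner_add_left cinner_add_right
      cinner_smult_left cinner_smult_right algebra_simps)

lemma psd_real: "psd A \<Longrightarrow> cinner x (A *v x) = complex_of_real (Re (cinner x (A *v x)))"
  unfolding psd_def by (simp add: complex_eq_iff)

lemma psd_herm:
  assumes "psd (A::'n::finite cmat)"
  shows "cinner y (A *v x) = cnj (cinner x (A *v y))"
proof -
  define X where "X = cinner x (A *v y)"
  define Y where "Y = cinner y (A *v x)"
  have i1: "Im (cinner (x + 1 *s y) (A *v (x + 1 *s y))) = 0"
    using assms unfolding psd_def by blast
  have i2: "Im (cinner (x + \<i> *s y) (A *v (x + \<i> *s y))) = 0"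
    using assms unfolding psd_def by blast
  have ix: "Im (cinner x (A *v x)) = 0" and iy: "Im (cinner y (A *v y)) = 0"
    using assms unfolding psd_def by blast+
  from i1 ix iy have a: "Im X + Im Y = 0" unfolding q_expand X_def Y_def by simp
  from i2 ix iy have b: "Re X - Re Y = 0" unfolding q_expand X_def Y_def by simp
  from a b have "Y = cnj X" by (simp add: complex_eq_iff)
  then show ?thesis unfolding X_def Y_def .
qed

lemma psd_CS:
  assumes "psd (A::'n::finite cmat)"
  shows "(cmod (cinner x (A *v y)))^2 \<le> Re (cinner x (A *v x)) * Re (cinner y (A *v y))"
proof -
  define X where "X = cinner x (A *v y)"
  define a where "a = Re (cinner x (A *v x))"
  define b where "b = Re (cinner y (A *v y))"
  have b0: "b \<ge> 0" and a0: "a \<ge> 0" using assms unfolding psd_def a_def b_def by auto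
  have key: "a - 2 * s * (cmod X)^2 + s^2 * (cmod X)^2 * b \<ge> 0" for s :: real
  proof -
    define c where "c = - complex_of_real s * cnj X"
    have ge: "Re (cinner (x + c *s y) (A *v (x + c *s y))) \<ge> 0"
      using assms unfolding psd_def by blast
    have h: "cinner y (A *v x) = cnj X" unfolding X_def by (rule psd_herm[OF assms])
    have rc1: "Re (c * X) = - s * (cmod X)^2"
      unfolding c_def cmod_power2 by (simp add: power2_eq_square algebra_simps)
    have rc2: "Re (cnj c * cnj X) = - s * (cmod X)^2"
      unfolding c_def cmod_power2 by (simp add: power2_eq_square algebra_simps)
    have cc: "cnj c * c = complex_of_real (s^2 * (cmod X)^2)"
    proof -
      have "cmod c = \<bar>s\<bar> * cmod X" unfolding c_def by (simp add: norm_mult)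
      then show ?thesis unfolding cnj_mult_self by (simp add: power_mult_distrib)
    qed
    have rm: "Re (complex_of_real r * z) = r * Re z" for r z by simp
    have e: "cinner (x + c *s y) (A *v (x + c *s y)) = cinner x (A *v x) + c * X + cnj c * cnj X
        + complex_of_real (s^2 * (cmod X)^2) * cinner y (A *v y)"
      unfolding q_expand h cc X_def ..
    have "Re (cinner (x + c *s y) (A *v (x + c *s y))) = a + (- s * (cmod X)^2) + (- s * (cmod X)^2)
        + (s^2 * (cmod X)^2) * b"
      unfolding e a_def b_def by (simp only: plus_complex.sel rc1 rc2 rm)
    then show ?thesis using ge by simp
  qed
  show ?thesis
  proof (cases "b = 0")
    case True
    have "(cmod X)^2 = 0"
    proof (rule ccontr)
      assume ne: "(cmod X)^2 \<noteq> 0"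
      then have pos: "(cmod X)^2 > 0" by simp
      have "a - 2 * ((a + 1) / (2 * (cmod X)^2)) * (cmod X)^2 \<ge> 0"
        using key[of "(a + 1) / (2 * (cmod X)^2)"] True by simp
      then show False using pos by (simp add: field_simps)
    qed
    then show ?thesis using True unfolding X_def a_def b_def by simp
  next
    case False
    then have bp: "b > 0" using b0 by simp
    have "a - 2 * (1/b) * (cmod X)^2 + (1/b)^2 * (cmod X)^2 * b \<ge> 0" by (rule key)
    then have "a - (cmod X)^2 / b \<ge> 0" using bp by (simp add: power2_eq_square field_simps)
    then have "(cmod X)^2 \<le> a * b" using bp by (simp add: field_simps)
    then show ?thesis unfolding X_def a_def b_def .
  qed
qed

lemma psd_zero_form:
  assumes "psd (A::'n::finite cmat)" "Re (cinner y (A *v y)) = 0"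
  shows "A *v y = 0" "cinner y (A *v z) = 0" "cinner z (A *v y) = 0"
proof -
  have z: "cinner z (A *v y) = 0" for z
    using psd_CS[OF assms(1), of z y] assms(2) by simp
  then show "cinner z (A *v y) = 0" .
  show "A *v y = 0" using z[of "A *v y"] by simp
  show "cinner y (A *v z) = 0" using psd_herm[OF assms(1), of y z] z[of z] by simp
qed

lemma psd_add: "psd A \<Longrightarrow> psd B \<Longrightarrow> psd ((A::'n::finite cmat) + B)"
  unfolding psd_def by (simp add: matrix_vector_mult_add_rdistrib cinner_add_right)

lemma psd_scaleR: "psd A \<Longrightarrow> r \<ge> 0 \<Longrightarrow> psd (r *\<^sub>R (A::'n::finite cmat))"
  unfolding psd_def by (simp add: mat_scaleR_mv cinner_scaleR_right)

lemma psd_0: "psd (0::'n::finite cmat)"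
  unfolding psd_def by simp

lemma psd_sum_list: "(\<And>D. D \<in> set Ds \<Longrightarrow> psd (f D)) \<Longrightarrow> psd (sum_list (map f Ds) :: 'n::finite cmat)"
  by (induction Ds) (auto intro: psd_add psd_0)

lemma psd_congr:
  assumes "psd \<rho>"
  shows "psd ((X::'n::finite cmat) ** \<rho> ** adjoint X)"
proof -
  have "cinner x ((X ** \<rho> ** adjoint X) *v x) = cinner (adjoint X *v x) (\<rho> *v (adjoint X *v x))" for x
    by (simp add: matrix_vector_mul_assoc[symmetric] cinner_adjoint)
  then show ?thesis using assms unfolding psd_def by simp
qed

lemma tendsto_q:
  assumes "(f \<longlongrightarrow> (A::'n::finite cmat)) F"
  shows "((\<lambda>t. cinner x (f t *v x)) \<longlongrightarrow> cinner x (A *v x)) F"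
  unfolding cinner_def matrix_vector_mult_def
  by (intro tendsto_intros assms)

lemma psd_limit:
  assumes "(f \<longlongrightarrow> (A::'n::finite cmat)) F" "F \<noteq> bot" "eventually (\<lambda>t. psd (f t)) F"
  shows "psd A"
  unfolding psd_def
proof
  fix x
  have l: "((\<lambda>t. cinner x (f t *v x)) \<longlongrightarrow> cinner x (A *v x)) F" by (rule tendsto_q[OF assms(1)])
  have "((\<lambda>t. Im (cinner x (f t *v x))) \<longlongrightarrow> Im (cinner x (A *v x))) F" by (rule tendsto_Im[OF l])
  moreover have "eventually (\<lambda>t. Im (cinner x (f t *v x)) = 0) F"
    using assms(3) by (rule eventually_mono) (simp add: psd_def)
  ultimately have "((\<lambda>t. 0) \<longlongrightarrow> Im (cinner x (A *v x))) F"
    by (rule Lim_transform_eventually)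
  then have "Im (cinner x (A *v x)) = 0" using assms(2) tendsto_unique tendsto_const by metis
  moreover have "Re (cinner x (A *v x)) \<ge> 0"
  proof (rule tendsto_lowerbound[OF tendsto_Re[OF l]])
    show "eventually (\<lambda>t. 0 \<le> Re (cinner x (f t *v x))) F"
      using assms(3) by (rule eventually_mono) (simp add: psd_def)
  qed (rule assms(2))
  ultimately show "Im (cinner x (A *v x)) = 0 \<and> 0 \<le> Re (cinner x (A *v x))" by simp
qed



section \<open>Structure of the Lindblad generator\<close>

definition Gm :: "'n::finite cmat list \<Rightarrow> 'n cmat" where
  "Gm Ds = sum_list (map (\<lambda>D. adjoint D ** D) Ds)"
definition Mh :: "'n::finite cmat list \<Rightarrow> 'n cmat" where
  "Mh Ds = (- (1/2)) *\<^sub>R Gm Ds"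
definition Phi :: "'n::finite cmat list \<Rightarrow> 'n cmat \<Rightarrow> 'n cmat" where
  "Phi Ds \<rho> = sum_list (map (\<lambda>D. D ** \<rho> ** adjoint D) Ds)"

lemma adjoint_0[simp]: "adjoint (0::'n::finite cmat) = 0"
  by (simp add: vec_eq_iff adjoint_def)

lemma adjoint_Gm: "adjoint (Gm Ds) = Gm Ds"
  by (induction Ds) (simp_all add: Gm_def adjoint_add adjoint_mult)

lemma adjoint_Mh: "adjoint (Mh Ds) = Mh Ds"
  unfolding Mh_def adjoint_scaleR adjoint_Gm ..

lemma lindblad_split:
  "lindblad_D Ds \<rho> = Phi Ds \<rho> + (Mh Ds ** \<rho> + \<rho> ** Mh Ds)"
proof (induction Ds)
  case Nil
  then show ?case by (simp add: lindblad_D_def Phi_def Mh_def Gm_def)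
next
  case (Cons D Ds)
  have l: "lindblad_D (D # Ds) \<rho> = (D ** \<rho> ** adjoint D
      - (1/2::real) *\<^sub>R ((adjoint D ** D) ** \<rho> + \<rho> ** (adjoint D ** D))) + lindblad_D Ds \<rho>"
    by (simp add: lindblad_D_def)
  have p: "Phi (D # Ds) \<rho> = D ** \<rho> ** adjoint D + Phi Ds \<rho>" by (simp add: Phi_def)
  have m: "Mh (D # Ds) = (- (1/2)) *\<^sub>R (adjoint D ** D) + Mh Ds"
    by (simp add: Mh_def Gm_def scaleR_add_right)
  show ?case unfolding l p m Cons
    by (simp add: mat_add_rdistrib matrix_add_ldistrib mat_mult_scaleR_left mat_mult_scaleR_right
        mat_diff_rdistrib mat_diff_ldistrib scaleR_add_right algebra_simps)
qed

lemma linear_sandwich: "linear (\<lambda>\<rho>::'n::finite cmat. (A::'n::finite cmat) ** \<rho> ** (B::'n cmat))"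
  by (rule linearI) (simp_all add: matrix_add_ldistrib mat_add_rdistrib mat_mult_scaleR_left mat_mult_scaleR_right)

lemma linear_Phi: "linear (Phi Ds)"
proof (induction Ds)
  case Nil
  then show ?case by (simp add: Phi_def[abs_def] linear_zero)
next
  case (Cons D Ds)
  have "Phi (D # Ds) = (\<lambda>\<rho>. D ** \<rho> ** adjoint D + Phi Ds \<rho>)"
    by (simp add: Phi_def[abs_def])
  then show ?case using linear_compose_add[OF linear_sandwich Cons] by simp
qed

lemma linear_lindblad: fixes Ds :: "'n::finite cmat list" shows "linear (lindblad_D Ds)"
proof -
  have a: "linear (\<lambda>\<rho>::'n cmat. Mh Ds ** \<rho>)" using linear_sandwich[of "Mh Ds" "mat 1"] by simp
  have b: "linear (\<lambda>\<rho>::'n cmat. \<rho> ** Mh Ds)" using linear_sandwich[of "mat 1" "Mh Ds"] by simp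
  have "lindblad_D Ds = (\<lambda>\<rho>. Phi Ds \<rho> + ((Mh Ds ** \<rho>) + (\<rho> ** Mh Ds)))"
    by (simp add: lindblad_split[abs_def])
  then show ?thesis
    using linear_compose_add[OF linear_Phi linear_compose_add[OF a b]] by simp
qed

lemma bounded_linear_lindblad: "bounded_linear (lindblad_D Ds)"
  using linear_lindblad linear_conv_bounded_linear by blast

lemma bounded_linear_sandwich: "bounded_linear (\<lambda>\<rho>::'n::finite cmat. (A::'n::finite cmat) ** \<rho> ** (B::'n cmat))"
  using linear_sandwich linear_conv_bounded_linear by blast

lemma trace_scaleR: "trace (r *\<^sub>R (A::'n::finite cmat)) = complex_of_real r * trace A"
  by (simp add: trace_def sum_distrib_left vector_scaleR_component csc)

lemma trace_lindblad: "trace (lindblad_D Ds \<rho>) = 0"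
proof (induction Ds)
  case Nil
  then show ?case by (simp add: lindblad_D_def trace_def)
next
  case (Cons D Ds)
  have t1: "trace (D ** \<rho> ** adjoint D) = trace ((adjoint D ** D) ** \<rho>)"
    by (metis trace_mul_sym matrix_mul_assoc)
  have t2: "trace (\<rho> ** (adjoint D ** D)) = trace ((adjoint D ** D) ** \<rho>)"
    by (rule trace_mul_sym)
  have "trace (lindblad_D (D # Ds) \<rho>) = trace (D ** \<rho> ** adjoint D)
      - complex_of_real (1/2) * (trace ((adjoint D ** D) ** \<rho>) + trace (\<rho> ** (adjoint D ** D)))
      + trace (lindblad_D Ds \<rho>)"
    by (simp add: lindblad_D_def trace_add trace_sub trace_scaleR)
  also have "\<dots> = 0" unfolding t1 t2 Cons by simp
  finally show ?case .
qed

definition sapp :: "'a::euclidean_space sop \<Rightarrow> 'a \<Rightarrow> 'a" where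
  "sapp X v = blinfun_apply (sop_rep X) v"

definition sop_of :: "('a::euclidean_space \<Rightarrow> 'a) \<Rightarrow> 'a sop" where
  "sop_of f = sop_abs (Blinfun f)"

lemma sapp_sop_of: "bounded_linear f \<Longrightarrow> sapp (sop_of f) = f"
  by (rule ext) (simp add: sapp_def sop_of_def sop_abs_inverse bounded_linear_Blinfun_apply)

lemma sapp_mult: "sapp (X * Y) v = sapp X (sapp Y v)"
  unfolding sapp_def by transfer simp

lemma sapp_one: "sapp 1 v = v"
  unfolding sapp_def by transfer simp

lemma sapp_add: "sapp (X + Y) v = sapp X v + sapp Y v"
  unfolding sapp_def by transfer (simp add: blinfun.bilinear_simps)

lemma sapp_scaleR: "sapp (r *\<^sub>R X) v = r *\<^sub>R sapp X v"
  unfolding sapp_def by transfer (simp add: blinfun.bilinear_simps)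

lemma sapp_power: "sapp (X ^ k) v = (sapp X ^^ k) v"
  by (induction k arbitrary: v) (simp_all add: sapp_one sapp_mult)

lemma bounded_linear_sapp_left: "bounded_linear (\<lambda>X. sapp X v)"
proof (rule bounded_linear_intro[where K = "norm v"])
  show "sapp (X + Y) v = sapp X v + sapp Y v" for X Y by (rule sapp_add)
  show "sapp (r *\<^sub>R X) v = r *\<^sub>R sapp X v" for r X by (rule sapp_scaleR)
  show "norm (sapp X v) \<le> norm X * norm v" for X
    unfolding sapp_def norm_sop_rep by (rule norm_blinfun)
qed

lemma bounded_linear_sapp_right: "bounded_linear (sapp X)"
  unfolding sapp_def by (rule blinfun.bounded_linear_right)



section \<open>The semigroup\<close>

definition Lop :: "'n::finite cmat list \<Rightarrow> 'n cmat sop" where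
  "Lop Ds = sop_of (lindblad_D Ds)"
definition Rop :: "'n::finite cmat list \<Rightarrow> 'n cmat sop" where
  "Rop Ds = sop_of (\<lambda>\<rho>. Mh Ds ** \<rho> ** Mh Ds)"
definition E :: "'n::finite cmat list \<Rightarrow> real \<Rightarrow> 'n cmat \<Rightarrow> 'n cmat" where
  "E Ds t \<rho> = sapp (exp (t *\<^sub>R Lop Ds)) \<rho>"

lemma sapp_Lop: "sapp (Lop Ds) \<rho> = lindblad_D Ds \<rho>"
  unfolding Lop_def by (simp add: sapp_sop_of bounded_linear_lindblad)

lemma sapp_Rop: "sapp (Rop Ds) \<rho> = Mh Ds ** \<rho> ** Mh Ds"
  unfolding Rop_def by (simp add: sapp_sop_of bounded_linear_sandwich)

lemma evol_eq: "evol (lindblad_D Ds) t \<rho> = E Ds t \<rho>"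
proof -
  have "E Ds t \<rho> = sapp (\<Sum>n. (t *\<^sub>R Lop Ds)^n /\<^sub>R fact n) \<rho>"
    unfolding E_def exp_def ..
  also have "\<dots> = (\<Sum>n. sapp ((t *\<^sub>R Lop Ds)^n /\<^sub>R fact n) \<rho>)"
    by (rule bounded_linear.suminf[OF bounded_linear_sapp_left]) (rule summable_exp_generic)
  also have "\<dots> = (\<Sum>n. (t ^ n / fact n) *\<^sub>R (lindblad_D Ds ^^ n) \<rho>)"
  proof -
    have "sapp ((t *\<^sub>R Lop Ds)^n /\<^sub>R fact n) \<rho> = (t ^ n / fact n) *\<^sub>R (lindblad_D Ds ^^ n) \<rho>" for n
    proof -
      have "sapp (Lop Ds ^ n) \<rho> = (lindblad_D Ds ^^ n) \<rho>"
        by (simp add: sapp_power sapp_Lop[abs_def])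
      then show ?thesis by (simp add: sapp_scaleR scaleR_power divide_inverse mult.commute)
    qed
    then show ?thesis by simp
  qed
  finally show ?thesis unfolding evol_def ..
qed

lemma E_0: "E Ds 0 \<rho> = \<rho>"
  unfolding E_def by (simp add: sapp_one)

lemma E_add: "E Ds (s + t) \<rho> = E Ds s (E Ds t \<rho>)"
proof -
  have "exp ((s + t) *\<^sub>R Lop Ds) = exp (s *\<^sub>R Lop Ds) * exp (t *\<^sub>R Lop Ds)"
    unfolding scaleR_add_left by (rule exp_add_commuting) simp
  then show ?thesis unfolding E_def by (simp add: sapp_mult)
qed

lemma E_plus: "E Ds t (a + b) = E Ds t a + E Ds t b"
  unfolding E_def by (rule linear_add[OF bounded_linear.linear[OF bounded_linear_sapp_right]])

lemma E_diff: "E Ds t (a - b) = E Ds t a - E Ds t b"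
  unfolding E_def by (rule linear_diff[OF bounded_linear.linear[OF bounded_linear_sapp_right]])

lemma E_scaleR: "E Ds t (r *\<^sub>R a) = r *\<^sub>R E Ds t a"
  unfolding E_def by (rule linear_scale[OF bounded_linear.linear[OF bounded_linear_sapp_right]])

lemma E_zero: "E Ds t 0 = 0"
  unfolding E_def by (rule linear_0[OF bounded_linear.linear[OF bounded_linear_sapp_right]])

lemma E_sum_list: "E Ds t (sum_list (map f xs)) = sum_list (map (\<lambda>x. E Ds t (f x)) xs)"
  by (induction xs) (simp_all add: E_zero E_plus)

lemma linear_trace: "linear (trace :: 'n::finite cmat \<Rightarrow> complex)"
  by (rule linearI) (simp_all add: trace_add trace_scaleR csc)

lemma E_trace: "trace (E Ds t \<rho>) = trace \<rho>"
proof -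
  have bl: "bounded_linear (trace :: 'n::finite cmat \<Rightarrow> complex)"
    using linear_trace linear_conv_bounded_linear by blast
  define f where "f n = (t ^ n / fact n) *\<^sub>R (lindblad_D Ds ^^ n) \<rho>" for n
  have sf: "summable f"
  proof -
    have "summable (\<lambda>n. sapp ((t *\<^sub>R Lop Ds)^n /\<^sub>R fact n) \<rho>)"
      by (rule bounded_linear.summable[OF bounded_linear_sapp_left summable_exp_generic])
    moreover have "sapp ((t *\<^sub>R Lop Ds)^n /\<^sub>R fact n) \<rho> = f n" for n
    proof -
      have "sapp (Lop Ds ^ n) \<rho> = (lindblad_D Ds ^^ n) \<rho>"
        by (simp add: sapp_power sapp_Lop[abs_def])
      then show ?thesis unfolding f_def by (simp add: sapp_scaleR scaleR_power divide_inverse mult.commute)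
    qed
    ultimately show ?thesis by simp
  qed
  have "E Ds t \<rho> = suminf f" unfolding evol_eq[symmetric] evol_def f_def ..
  then have "trace (E Ds t \<rho>) = (\<Sum>n. trace (f n))"
    using bounded_linear.suminf[OF bl sf] by simp
  also have "(\<lambda>n. trace (f n)) = (\<lambda>n. if n = 0 then trace \<rho> else 0)"
  proof
    fix n show "trace (f n) = (if n = 0 then trace \<rho> else 0)"
    proof (cases n)
      case 0 then show ?thesis by (simp add: f_def)
    next
      case (Suc m)
      have "(lindblad_D Ds ^^ n) \<rho> = lindblad_D Ds ((lindblad_D Ds ^^ m) \<rho>)" using Suc by simp
      then show ?thesis using Suc by (simp add: f_def trace_scaleR trace_lindblad)
    qed
  qed
  also have "(\<Sum>n. (if n = 0 then trace \<rho> else 0)) = trace \<rho>"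
    using sums_single[of 0 "\<lambda>_. trace \<rho>"] sums_unique by (metis (no_types, lifting))
  finally show ?thesis .
qed

section \<open>Positivity\<close>

lemma Aop_psd:
  fixes Ds :: "'n::finite cmat list"
  assumes "psd \<rho>" "\<epsilon> \<ge> 0"
  shows "psd (sapp (1 + \<epsilon> *\<^sub>R Lop Ds + \<epsilon>^2 *\<^sub>R Rop Ds) \<rho>)"
proof -
  define M where "M = Mh Ds"
  define X where "X = mat 1 + \<epsilon> *\<^sub>R M"
  have aX: "adjoint X = X" unfolding X_def M_def by (simp add: adjoint_add adjoint_scaleR adjoint_Mh)
  have "sapp (1 + \<epsilon> *\<^sub>R Lop Ds + \<epsilon>^2 *\<^sub>R Rop Ds) \<rho>
      = \<rho> + \<epsilon> *\<^sub>R (Phi Ds \<rho> + (M ** \<rho> + \<rho> ** M)) + \<epsilon>^2 *\<^sub>R (M ** \<rho> ** M)"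
    unfolding M_def by (simp add: sapp_add sapp_one sapp_scaleR sapp_Lop sapp_Rop lindblad_split)
  also have "\<dots> = X ** \<rho> ** adjoint X + \<epsilon> *\<^sub>R Phi Ds \<rho>"
    unfolding aX unfolding X_def
    by (simp add: matrix_add_ldistrib mat_add_rdistrib mat_mult_scaleR_left mat_mult_scaleR_right
        scaleR_add_right power2_eq_square algebra_simps)
  finally have eq: "sapp (1 + \<epsilon> *\<^sub>R Lop Ds + \<epsilon>^2 *\<^sub>R Rop Ds) \<rho> = X ** \<rho> ** adjoint X + \<epsilon> *\<^sub>R Phi Ds \<rho>" .
  have "psd (Phi Ds \<rho>)" unfolding Phi_def
    by (rule psd_sum_list) (rule psd_congr[OF assms(1)])
  then show ?thesis unfolding eq
    by (intro psd_add psd_congr assms psd_scaleR)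
qed

lemma E_psd:
  fixes Ds :: "'n::finite cmat list"
  assumes "psd \<rho>" "t \<ge> 0"
  shows "psd (E Ds t \<rho>)"
proof -
  define a where "a n = t *\<^sub>R Lop Ds + (t^2 / real n) *\<^sub>R Rop Ds" for n
  have "(\<lambda>n. (t^2 / real n) *\<^sub>R Rop Ds) \<longlonglongrightarrow> 0 *\<^sub>R Rop Ds"
    by (intro tendsto_scaleR tendsto_const lim_const_over_n)
  then have "a \<longlonglongrightarrow> t *\<^sub>R Lop Ds + 0 *\<^sub>R Rop Ds"
    unfolding a_def by (intro tendsto_add tendsto_const)
  then have "a \<longlonglongrightarrow> t *\<^sub>R Lop Ds" by simp
  from exp_limit_seq[OF this]
  have l: "(\<lambda>n. (1 + a n /\<^sub>R real n)^n) \<longlonglongrightarrow> exp (t *\<^sub>R Lop Ds)" .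
  have l2: "(\<lambda>n. sapp ((1 + a n /\<^sub>R real n)^n) \<rho>) \<longlonglongrightarrow> E Ds t \<rho>"
    unfolding E_def by (rule bounded_linear.tendsto[OF bounded_linear_sapp_left l])
  show ?thesis
  proof (rule psd_limit[OF l2])
    show "sequentially \<noteq> bot" by simp
    show "\<forall>\<^sub>F n in sequentially. psd (sapp ((1 + a n /\<^sub>R real n) ^ n) \<rho>)"
      using eventually_gt_at_top[of 0]
    proof (rule eventually_mono)
      fix n :: nat assume n: "n > 0"
      define \<epsilon> where "\<epsilon> = t / real n"
      have e0: "\<epsilon> \<ge> 0" unfolding \<epsilon>_def using assms by simp
      have eq: "1 + a n /\<^sub>R real n = 1 + \<epsilon> *\<^sub>R Lop Ds + \<epsilon>^2 *\<^sub>R Rop Ds"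
        unfolding a_def \<epsilon>_def using n by (simp add: scaleR_add_right power2_eq_square divide_inverse mult.commute)
      have "psd (sapp ((1 + \<epsilon> *\<^sub>R Lop Ds + \<epsilon>^2 *\<^sub>R Rop Ds) ^ k) \<sigma>)" if "psd \<sigma>" for k \<sigma>
        using that
      proof (induction k arbitrary: \<sigma>)
        case 0 then show ?case by (simp add: sapp_one)
      next
        case (Suc k)
        have "sapp ((1 + \<epsilon> *\<^sub>R Lop Ds + \<epsilon>^2 *\<^sub>R Rop Ds) ^ Suc k) \<sigma>
          = sapp ((1 + \<epsilon> *\<^sub>R Lop Ds + \<epsilon>^2 *\<^sub>R Rop Ds) ^ k) (sapp (1 + \<epsilon> *\<^sub>R Lop Ds + \<epsilon>^2 *\<^sub>R Rop Ds) \<sigma>)"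
          by (simp only: power_Suc2 sapp_mult)
        then show ?case using Suc.IH[OF Aop_psd[OF Suc.prems e0]] by simp
      qed
      then show "psd (sapp ((1 + a n /\<^sub>R real n) ^ n) \<rho>)" unfolding eq using assms(1) by blast
    qed
  qed
qed



section \<open>Outer products and densities\<close>

lemma outer_mv: "outer x x *v v = cinner x v *s x"
  by (simp add: vec_eq_iff outer_def matrix_vector_mult_def cinner_def sum_distrib_left mult_ac)

lemma psd_outer: "psd (outer x x)"
proof -
  have "cinner v (outer x x *v v) = complex_of_real ((cmod (cinner x v))^2)" for v
    unfolding outer_mv cinner_smult_right
    by (metis cinner_cnj complex_norm_square mult.commute)
  then show ?thesis unfolding psd_def by simp
qed

lemma trace_outer: "trace (outer x x) = cinner x x"
  by (simp add: trace_def outer_def cinner_def mult.commute)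

lemma scaleR_smult: "r *\<^sub>R (c *s (x::complex^'n::finite)) = (complex_of_real r * c) *s x"
  by (simp add: vec_eq_iff csc)

lemma mi1: "(x::complex) * (if P then 1 else 0) = (if P then x else 0)" by simp
lemma mi2: "(if P then 1 else 0) * (x::complex) = (if P then x else 0)" by simp
lemma mi3: "cnj (if P then 1 else 0) = (if P then 1 else 0)" by simp

lemma axis_entry: "cinner (axis i 1) ((A::'n::finite cmat) *v axis j 1) = A $ i $ j"
  by (simp add: cinner_def matrix_vector_mult_def axis_def mi1 mi2 mi3 sum.delta)

lemma cinner_axis: "cinner x (axis i 1) = cnj (x $ i)"
  by (simp add: cinner_def axis_def mi1 mi2 mi3 sum.delta)

lemma trace_axis: "trace (A::'n::finite cmat) = (\<Sum>i\<in>UNIV. cinner (axis i 1) (A *v axis i 1))"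
  by (simp add: trace_def axis_entry)

locale lsetup =
  fixes Ds :: "'n::finite cmat list" and H'' :: "(complex^'n) set" and \<rho>d :: "'n cmat"
  assumes csub: "csubspace H''"
    and stab: "cond_asymp_stable (lindblad_D Ds) \<rho>d H''"
begin

definition S :: "(real \<times> 'n cmat) set" where
  "S = {p. fst p \<ge> 0 \<and> snd p \<in> densities H''}"
definition N :: "(complex^'n) set" where
  "N = {y. \<forall>p\<in>S. E Ds (fst p) (snd p) *v y = 0}"
definition H' :: "(complex^'n) set" where
  "H' = {x. \<forall>y\<in>N. cinner y x = 0}"
definition ev :: "(real \<times> 'n cmat) \<Rightarrow> 'n cmat" where
  "ev p = E Ds (fst p) (snd p)"
definition Om :: "'n cmat set" where
  "Om = {sum_list (map ev l) | l. set l \<subseteq> S}"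

lemma psd_ev: "p \<in> S \<Longrightarrow> psd (ev p)"
  unfolding ev_def S_def densities_def density_def by (auto intro: E_psd)

lemma psd_Om: "\<omega> \<in> Om \<Longrightarrow> psd \<omega>"
  unfolding Om_def by (auto intro!: psd_sum_list psd_ev)

lemma Om_N: "\<omega> \<in> Om \<Longrightarrow> y \<in> N \<Longrightarrow> \<omega> *v y = 0"
proof -
  assume "\<omega> \<in> Om" "y \<in> N"
  then obtain l where l: "set l \<subseteq> S" "\<omega> = sum_list (map ev l)" unfolding Om_def by auto
  have "set l \<subseteq> S \<Longrightarrow> sum_list (map ev l) *v y = 0" for l
    using \<open>y \<in> N\<close>
    by (induction l) (auto simp: N_def ev_def matrix_vector_mult_add_rdistrib)
  then show ?thesis using l by simp
qed

lemma Om_append: "\<omega> \<in> Om \<Longrightarrow> p \<in> S \<Longrightarrow> \<omega> + ev p \<in> Om"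
proof -
  assume "\<omega> \<in> Om" "p \<in> S"
  then obtain l where l: "set l \<subseteq> S" "\<omega> = sum_list (map ev l)" unfolding Om_def by auto
  then have "\<omega> + ev p = sum_list (map ev (l @ [p]))" by simp
  moreover have "set (l @ [p]) \<subseteq> S" using l \<open>p \<in> S\<close> by auto
  ultimately show ?thesis unfolding Om_def by blast
qed

lemma Om_E: assumes "\<omega> \<in> Om" "s \<ge> 0" shows "E Ds s \<omega> \<in> Om"
proof -
  obtain l where l: "set l \<subseteq> S" "\<omega> = sum_list (map ev l)" using assms unfolding Om_def by auto
  define l' where "l' = map (\<lambda>p. (s + fst p, snd p)) l"
  have "E Ds s \<omega> = sum_list (map ev l')"
    unfolding l(2) E_sum_list by (simp add: l'_def ev_def E_add o_def)
  moreover have "set l' \<subseteq> S" using l assms(2) unfolding l'_def S_def by auto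
  ultimately show ?thesis unfolding Om_def by auto
qed

lemma N_smult: "y \<in> N \<Longrightarrow> c *s y \<in> N"
  unfolding N_def by (simp add: mat_mv_smult)

lemma N_subspace: "subspace N"
  unfolding subspace_def N_def
  by (simp add: matrix_vector_right_distrib mat_mv_scaleR)

lemma H'_csubspace: "csubspace H'"
  unfolding csubspace_def H'_def by (simp add: cinner_add_right cinner_smult_right)

lemma H''_sub: "H'' \<subseteq> H'"
proof
  fix x assume x: "x \<in> H''"
  show "x \<in> H'"
  proof (cases "x = 0")
    case True then show ?thesis unfolding H'_def by simp
  next
    case False
    define r where "r = 1 / (norm x)^2"
    define \<rho>0 where "\<rho>0 = r *\<^sub>R outer x x"
    have r0: "r \<noteq> 0" unfolding r_def using False by simp
    have mv: "\<rho>0 *v v = (complex_of_real r * cinner x v) *s x" for v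
      unfolding \<rho>0_def mat_scaleR_mv outer_mv scaleR_smult ..
    have "\<rho>0 \<in> densities H''"
      unfolding densities_def density_def
    proof (intro CollectI conjI)
      show "psd \<rho>0" unfolding \<rho>0_def using psd_outer r_def by (intro psd_scaleR) auto
      have "r * (norm x)^2 = 1" unfolding r_def using False by simp
      then show "trace \<rho>0 = 1" unfolding \<rho>0_def trace_scaleR trace_outer cinner_self
        by (metis of_real_1 of_real_mult)
      show "supp \<rho>0 \<subseteq> H''" unfolding supp_def mv using csub x unfolding csubspace_def by auto
    qed
    then have S0: "(0, \<rho>0) \<in> S" unfolding S_def by simp
    show ?thesis unfolding H'_def
    proof (intro CollectI ballI)
      fix y assume "y \<in> N"
      then have "E Ds 0 \<rho>0 *v y = 0" using S0 unfolding N_def by force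
      then have "(complex_of_real r * cinner x y) *s x = 0" unfolding E_0 mv .
      then have "cinner x y = 0" using False r0 by (simp add: vec_eq_iff) (metis vec_eq_iff zero_index)
      then show "cinner y x = 0" using cinner_cnj[of x y] by simp
    qed
  qed
qed

definition kerm :: "'n cmat \<Rightarrow> (complex^'n) set" where
  "kerm A = {y. A *v y = 0}"

lemma subspace_kerm: "subspace (kerm A)"
  unfolding subspace_def kerm_def by (simp add: matrix_vector_right_distrib mat_mv_scaleR)

lemma kerm_add_psd:
  assumes "psd A" "psd B"
  shows "kerm (A + B) = kerm A \<inter> kerm B"
proof
  show "kerm A \<inter> kerm B \<subseteq> kerm (A + B)"
    unfolding kerm_def by (auto simp: matrix_vector_mult_add_rdistrib)
  show "kerm (A + B) \<subseteq> kerm A \<inter> kerm B"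
  proof
    fix y assume "y \<in> kerm (A + B)"
    then have "cinner y (A *v y) + cinner y (B *v y) = 0"
      unfolding kerm_def by (simp add: matrix_vector_mult_add_rdistrib cinner_add_right[symmetric])
    then have "Re (cinner y (A *v y)) + Re (cinner y (B *v y)) = 0"
      by (metis plus_complex.sel(1) zero_complex.sel(1))
    moreover have "Re (cinner y (A *v y)) \<ge> 0" "Re (cinner y (B *v y)) \<ge> 0"
      using assms unfolding psd_def by auto
    ultimately have "Re (cinner y (A *v y)) = 0" "Re (cinner y (B *v y)) = 0" by linarith+
    then show "y \<in> kerm A \<inter> kerm B" unfolding kerm_def
      using psd_zero_form(1)[OF assms(1)] psd_zero_form(1)[OF assms(2)] by auto
  qed
qed

lemma Om_nonempty: "0 \<in> Om"
  unfolding Om_def by (auto intro!: exI[of _ "[]"])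

lemma minimal_kernel: "\<exists>\<omega>\<in>Om. kerm \<omega> = N"
proof -
  obtain \<omega> where w: "\<omega> \<in> Om" and wmin: "\<And>\<omega>'. \<omega>' \<in> Om \<Longrightarrow> dim (kerm \<omega>) \<le> dim (kerm \<omega>')"
    using ex_has_least_nat[of "\<lambda>\<omega>. \<omega> \<in> Om" 0 "\<lambda>\<omega>. dim (kerm \<omega>)"] Om_nonempty by blast
  have "kerm \<omega> \<subseteq> N"
  proof
    fix y assume y: "y \<in> kerm \<omega>"
    show "y \<in> N" unfolding N_def mem_Collect_eq
    proof (rule ccontr)
      assume "\<not> (\<forall>p\<in>S. E Ds (fst p) (snd p) *v y = 0)"
      then obtain p where p: "p \<in> S" "ev p *v y \<noteq> 0" unfolding ev_def by auto
      have w': "\<omega> + ev p \<in> Om" by (rule Om_append[OF w p(1)])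
      have k: "kerm (\<omega> + ev p) = kerm \<omega> \<inter> kerm (ev p)"
        by (rule kerm_add_psd[OF psd_Om[OF w] psd_ev[OF p(1)]])
      have "kerm (\<omega> + ev p) \<subset> kerm \<omega>" unfolding k using y p(2) unfolding kerm_def by auto
      then have "span (kerm (\<omega> + ev p)) \<subset> span (kerm \<omega>)"
        using subspace_kerm span_eq_iff by metis
      then have "dim (kerm (\<omega> + ev p)) < dim (kerm \<omega>)" by (rule eucl.dim_psubset)
      with wmin[OF w'] show False by simp
    qed
  qed
  moreover have "N \<subseteq> kerm \<omega>" using Om_N[OF w] unfolding kerm_def by auto
  ultimately show ?thesis using w by blast
qed

end



lemma q_shift:
  assumes "(A::'n::finite cmat) *v v = 0" "\<And>z. cinner v (A *v z) = 0"
  shows "cinner (v + u) (A *v (v + u)) = cinner u (A *v u)"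
  using assms by (simp add: matrix_vector_right_distrib cinner_add_left cinner_add_right)

lemma q_scaleR: "cinner (r *\<^sub>R u) ((A::'n::finite cmat) *v (r *\<^sub>R u)) = complex_of_real (r^2) * cinner u (A *v u)"
  by (simp add: mat_mv_scaleR cinner_scaleR_left cinner_scaleR_right power2_eq_square)

lemma bilin_expand:
  "cinner (b *s \<psi> + w) ((A::'n::finite cmat) *v (g *s \<psi> + w')) =
     cnj b * g * cinner \<psi> (A *v \<psi>) + cnj b * cinner \<psi> (A *v w') + g * cinner w (A *v \<psi>) + cinner w (A *v w')"
  by (simp add: matrix_vector_right_distrib mat_mv_smult cinner_add_left cinner_add_right
      cinner_smult_left cinner_smult_right algebra_simps)

lemma bounded_linear_mv: "bounded_linear (\<lambda>x. (A::'n::finite cmat) *v x)"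
  using matrix_vector_mul_linear linear_conv_bounded_linear by blast

context lsetup
begin

definition w0 where "w0 = (SOME \<omega>. \<omega> \<in> Om \<and> kerm \<omega> = N)"

lemma w0: "w0 \<in> Om" "kerm w0 = N"
  using someI_ex[OF minimal_kernel[unfolded Bex_def]] unfolding w0_def by auto

lemma H'_subspace: "subspace H'"
proof -
  have "r *\<^sub>R x = complex_of_real r *s x" for r and x :: "complex^'n"
    by (simp add: vec_eq_iff csc)
  then show ?thesis using H'_csubspace unfolding csubspace_def subspace_def by simp
qed

lemma decomp: "\<exists>v u. v \<in> N \<and> u \<in> H' \<and> x = v + u"
proof -
  obtain v u where v: "v \<in> span N" and o: "\<And>w. w \<in> span N \<Longrightarrow> orthogonal u w" and x: "x = v + u"
    using orthogonal_subspace_decomp_exists[of N x] by blast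
  have sN: "span N = N" using N_subspace span_eq_iff by blast
  have "u \<in> H'" unfolding H'_def
  proof (intro CollectI ballI)
    fix w assume w: "w \<in> N"
    have "Re (cinner u w) = 0" using o[of w] w sN unfolding orthogonal_def inner_cinner by simp
    then have r1: "Re (cinner w u) = 0" using cinner_cnj[of u w] by (metis complex_cnj_cancel_iff complex_cnj_zero_iff
        cnj.sel(1))
    have "Re (cinner u (\<i> *s w)) = 0" using o[of "\<i> *s w"] N_smult[OF w] sN unfolding orthogonal_def inner_cinner by simp
    then have "Re (cinner (\<i> *s w) u) = 0" using cinner_cnj[of u "\<i> *s w"] by (metis cnj.sel(1))
    then have r2: "Im (cinner w u) = 0" unfolding cinner_smult_left by simp
    from r1 r2 show "cinner w u = 0" by (simp add: complex_eq_iff)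
  qed
  then show ?thesis using v x sN by blast
qed

lemma dens_N:
  assumes "\<sigma> \<in> densities H'" "y \<in> N"
  shows "\<sigma> *v y = 0" "\<And>z. cinner y (\<sigma> *v z) = 0"
proof -
  have p: "psd \<sigma>" using assms unfolding densities_def density_def by auto
  have "\<sigma> *v y \<in> H'" using assms(1) unfolding densities_def supp_def by auto
  then have "cinner y (\<sigma> *v y) = 0" using assms(2) unfolding H'_def by auto
  then have "Re (cinner y (\<sigma> *v y)) = 0" by simp
  from psd_zero_form[OF p this] show "\<sigma> *v y = 0" "\<And>z. cinner y (\<sigma> *v z) = 0" by auto
qed

lemma w0_N:
  assumes "y \<in> N"
  shows "w0 *v y = 0" "\<And>z. cinner y (w0 *v z) = 0"
proof -
  show a: "w0 *v y = 0" using w0(2) assms unfolding kerm_def by auto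
  have "Re (cinner y (w0 *v y)) = 0" using a by simp
  from psd_zero_form[OF psd_Om[OF w0(1)] this] show "\<And>z. cinner y (w0 *v z) = 0" by auto
qed

lemma lam_exists: "\<exists>lam>0. \<forall>u\<in>H'. Re (cinner u (w0 *v u)) \<ge> lam * (norm u)^2"
proof -
  define U where "U = H' \<inter> sphere 0 1"
  define f where "f u = inner u (w0 *v u)" for u
  have fq: "f u = Re (cinner u (w0 *v u))" for u unfolding f_def inner_cinner ..
  have H'r: "r *\<^sub>R u \<in> H'" if "u \<in> H'" for r u using H'_subspace that unfolding subspace_def by auto
  show ?thesis
  proof (cases "U = {}")
    case True
    have "u = 0" if "u \<in> H'" for u
    proof (rule ccontr)
      assume "u \<noteq> 0"
      then have "(1 / norm u) *\<^sub>R u \<in> U" unfolding U_def using H'r[OF that] by simp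
      then show False using True by simp
    qed
    show ?thesis
    proof (intro exI[of _ "1::real"] conjI ballI)
      fix u assume "u \<in> H'"
      then have "u = 0" by fact
      then show "Re (cinner u (w0 *v u)) \<ge> 1 * (norm u)^2" by simp
    qed simp
  next
    case False
    have cU: "compact U" unfolding U_def
      by (intro closed_Int_compact closed_subspace H'_subspace compact_sphere)
    have cf: "continuous_on U f" unfolding f_def
      by (intro continuous_intros linear_continuous_on bounded_linear_mv)
    obtain u0 where u0: "u0 \<in> U" and min: "\<And>u. u \<in> U \<Longrightarrow> f u0 \<le> f u"
      using continuous_attains_inf[OF cU False cf] by blast
    have pos: "f u0 > 0"
    proof (rule ccontr)
      assume "\<not> f u0 > 0"
      moreover have "f u0 \<ge> 0" unfolding fq using psd_Om[OF w0(1)] unfolding psd_def by auto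
      ultimately have "Re (cinner u0 (w0 *v u0)) = 0" unfolding fq by simp
      then have "w0 *v u0 = 0" by (rule psd_zero_form(1)[OF psd_Om[OF w0(1)]])
      then have "u0 \<in> N" using w0(2) unfolding kerm_def by auto
      moreover have "u0 \<in> H'" using u0 unfolding U_def by auto
      ultimately have "cinner u0 u0 = 0" unfolding H'_def by auto
      then have "u0 = 0" by simp
      then show False using u0 unfolding U_def by simp
    qed
    have "Re (cinner u (w0 *v u)) \<ge> f u0 * (norm u)^2" if u: "u \<in> H'" for u
    proof (cases "u = 0")
      case True then show ?thesis by simp
    next
      case False
      define u' where "u' = (1 / norm u) *\<^sub>R u"
      have "u' \<in> U" unfolding U_def u'_def using H'r[OF u] False by simp
      then have "f u0 \<le> f u'" by (rule min)
      also have "f u' = (1 / norm u)^2 * f u"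
        unfolding fq u'_def q_scaleR by simp
      finally have "f u0 * (norm u)^2 \<le> f u" using False by (simp add: field_simps)
      then show ?thesis unfolding fq .
    qed
    then show ?thesis using pos by blast
  qed
qed

lemma domination:
  assumes "\<sigma> \<in> densities H'"
  shows "\<exists>c\<ge>0. psd (c *\<^sub>R w0 - \<sigma>)"
proof -
  have p: "psd \<sigma>" using assms unfolding densities_def density_def by auto
  obtain lam where lam: "lam > 0" "\<And>u. u \<in> H' \<Longrightarrow> Re (cinner u (w0 *v u)) \<ge> lam * (norm u)^2"
    using lam_exists by blast
  obtain K where K: "K > 0" "\<And>x. norm (\<sigma> *v x) \<le> norm x * K"
    using bounded_linear.pos_bounded[OF bounded_linear_mv[of \<sigma>]] by blast
  have Bq: "Re (cinner u (\<sigma> *v u)) \<le> K * (norm u)^2" for u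
  proof -
    have "Re (cinner u (\<sigma> *v u)) = inner u (\<sigma> *v u)" unfolding inner_cinner ..
    also have "\<dots> \<le> norm u * norm (\<sigma> *v u)" by (rule norm_cauchy_schwarz)
    also have "\<dots> \<le> norm u * (norm u * K)" using K(2) by (simp add: mult_left_mono)
    finally show ?thesis by (simp add: power2_eq_square mult_ac)
  qed
  define c where "c = K / lam"
  have c0: "c \<ge> 0" unfolding c_def using K lam by simp
  have "psd (c *\<^sub>R w0 - \<sigma>)"
    unfolding psd_def
  proof
    fix x
    obtain v u where vu: "v \<in> N" "u \<in> H'" "x = v + u" using decomp by blast
    have e1: "cinner x (w0 *v x) = cinner u (w0 *v u)"
      unfolding vu(3) by (rule q_shift[OF w0_N(1)[OF vu(1)] w0_N(2)[OF vu(1)]])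
    have e2: "cinner x (\<sigma> *v x) = cinner u (\<sigma> *v u)"
      unfolding vu(3) by (rule q_shift[OF dens_N(1)[OF assms vu(1)] dens_N(2)[OF assms vu(1)]])
    have eq: "cinner x ((c *\<^sub>R w0 - \<sigma>) *v x) = complex_of_real c * cinner u (w0 *v u) - cinner u (\<sigma> *v u)"
      by (simp add: matrix_vector_mult_diff_rdistrib mat_scaleR_mv cinner_diff_right cinner_scaleR_right e1 e2)
    have i1: "Im (cinner u (w0 *v u)) = 0" using psd_Om[OF w0(1)] unfolding psd_def by auto
    have i2: "Im (cinner u (\<sigma> *v u)) = 0" using p unfolding psd_def by auto
    have "c * Re (cinner u (w0 *v u)) \<ge> c * (lam * (norm u)^2)"
      using lam(2)[OF vu(2)] c0 by (simp add: mult_left_mono)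
    also have "c * (lam * (norm u)^2) = K * (norm u)^2" unfolding c_def using lam by simp
    finally have "Re (cinner u (\<sigma> *v u)) \<le> c * Re (cinner u (w0 *v u))" using Bq[of u] by linarith
    then show "Im (cinner x ((c *\<^sub>R w0 - \<sigma>) *v x)) = 0 \<and> 0 \<le> Re (cinner x ((c *\<^sub>R w0 - \<sigma>) *v x))"
      unfolding eq using i1 i2 by simp
  qed
  then show ?thesis using c0 by blast
qed

lemma invariance:
  assumes "\<sigma> \<in> densities H'" "t \<ge> 0"
  shows "E Ds t \<sigma> \<in> densities H'"
proof -
  have p: "psd \<sigma>" and tr: "trace \<sigma> = 1" using assms unfolding densities_def density_def by auto
  obtain c where c: "c \<ge> 0" "psd (c *\<^sub>R w0 - \<sigma>)" using domination[OF assms(1)] by blast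
  define \<tau> where "\<tau> = E Ds t \<sigma>"
  have pt: "psd \<tau>" unfolding \<tau>_def by (rule E_psd[OF p assms(2)])
  have pD: "psd (c *\<^sub>R E Ds t w0 - \<tau>)"
    using E_psd[OF c(2) assms(2)] unfolding \<tau>_def E_diff E_scaleR .
  have wt: "E Ds t w0 \<in> Om" by (rule Om_E[OF w0(1) assms(2)])
  have "supp \<tau> \<subseteq> H'"
  proof
    fix x assume "x \<in> supp \<tau>"
    then obtain z where x: "x = \<tau> *v z" unfolding supp_def by auto
    show "x \<in> H'" unfolding H'_def
    proof (intro CollectI ballI)
      fix y assume y: "y \<in> N"
      have "E Ds t w0 *v y = 0" by (rule Om_N[OF wt y])
      then have "cinner y ((c *\<^sub>R E Ds t w0 - \<tau>) *v y) = - cinner y (\<tau> *v y)"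
        by (simp add: matrix_vector_mult_diff_rdistrib mat_scaleR_mv cinner_diff_right cinner_def sum_negf)
      then have "Re (cinner y (\<tau> *v y)) \<le> 0" using pD unfolding psd_def
        by (metis neg_0_le_iff_le uminus_complex.sel(1))
      moreover have "Re (cinner y (\<tau> *v y)) \<ge> 0" using pt unfolding psd_def by auto
      ultimately have "Re (cinner y (\<tau> *v y)) = 0" by simp
      from psd_zero_form(2)[OF pt this] show "cinner y x = 0" unfolding x .
    qed
  qed
  moreover have "trace \<tau> = 1" unfolding \<tau>_def E_trace tr ..
  ultimately show ?thesis unfolding \<tau>_def[symmetric] densities_def density_def using pt by simp
qed

end



context lsetup
begin

lemma E_conv: "\<rho>0 \<in> densities H'' \<Longrightarrow> ((\<lambda>t. E Ds t \<rho>0) \<longlongrightarrow> \<rho>d) at_top"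
  using stab unfolding cond_asymp_stable_def evol_eq by blast

lemma Om_lim: assumes "\<omega> \<in> Om" shows "\<exists>m::real. ((\<lambda>s. E Ds s \<omega>) \<longlongrightarrow> m *\<^sub>R \<rho>d) at_top"
proof -
  obtain l where l: "set l \<subseteq> S" "\<omega> = sum_list (map ev l)" using assms unfolding Om_def by auto
  have "set l \<subseteq> S \<Longrightarrow> ((\<lambda>s. E Ds s (sum_list (map ev l))) \<longlongrightarrow> real (length l) *\<^sub>R \<rho>d) at_top" for l
  proof (induction l)
    case Nil then show ?case by (simp add: E_zero)
  next
    case (Cons p l)
    have p: "fst p \<ge> 0" "snd p \<in> densities H''" using Cons.prems unfolding S_def by auto
    have f: "filterlim (\<lambda>s. s + fst p) at_top at_top"
      using filterlim_tendsto_add_at_top[OF tendsto_const filterlim_ident, of "fst p"]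
      by (simp add: add.commute)
    have "((\<lambda>s. E Ds (s + fst p) (snd p)) \<longlongrightarrow> \<rho>d) at_top"
      using filterlim_compose[OF E_conv[OF p(2)] f] .
    then have a: "((\<lambda>s. E Ds s (ev p)) \<longlongrightarrow> \<rho>d) at_top"
      unfolding ev_def E_add[symmetric] .
    have "((\<lambda>s. E Ds s (ev p) + E Ds s (sum_list (map ev l))) \<longlongrightarrow> \<rho>d + real (length l) *\<^sub>R \<rho>d) at_top"
      using tendsto_add[OF a Cons.IH] Cons.prems by simp
    then show ?case by (simp add: E_plus algebra_simps)
  qed
  then show ?thesis using l by blast
qed

lemma stability:
  assumes pure: "pure_state \<rho>d" and sig: "\<sigma> \<in> densities H'"
  shows "((\<lambda>t. E Ds t \<sigma>) \<longlongrightarrow> \<rho>d) at_top"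
proof -
  obtain \<psi> where psi: "cinner \<psi> \<psi> = 1" "\<rho>d = outer \<psi> \<psi>" using pure unfolding pure_state_def by auto
  obtain c where c: "c \<ge> 0" "psd (c *\<^sub>R w0 - \<sigma>)" using domination[OF sig] by blast
  obtain m where m: "((\<lambda>s. E Ds s w0) \<longlongrightarrow> m *\<^sub>R \<rho>d) at_top" using Om_lim[OF w0(1)] by blast
  have ps: "psd \<sigma>" and trs: "trace \<sigma> = 1" using sig unfolding densities_def density_def by auto
  define \<tau> where "\<tau> t = E Ds t \<sigma>" for t
  have ev0: "eventually (\<lambda>t::real. t \<ge> 0) at_top" by (rule eventually_ge_at_top)
  have evpsd: "eventually (\<lambda>t. psd (\<tau> t)) at_top"
    using ev0 by (rule eventually_mono) (simp add: \<tau>_def E_psd[OF ps])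
  have evtr: "\<forall>t. trace (\<tau> t) = 1" unfolding \<tau>_def E_trace trs by simp
  have evdom: "eventually (\<lambda>t. \<forall>w. Re (cinner w (\<tau> t *v w)) \<le> c * Re (cinner w (E Ds t w0 *v w))) at_top"
    using ev0
  proof (rule eventually_mono)
    fix t :: real assume t: "t \<ge> 0"
    have "psd (c *\<^sub>R E Ds t w0 - \<tau> t)"
      using E_psd[OF c(2) t] unfolding \<tau>_def E_diff E_scaleR .
    then show "\<forall>w. Re (cinner w (\<tau> t *v w)) \<le> c * Re (cinner w (E Ds t w0 *v w))"
      unfolding psd_def
      by (simp add: matrix_vector_mult_diff_rdistrib mat_scaleR_mv cinner_diff_right cinner_scaleR_right)
  qed
  have qrho: "cinner w (\<rho>d *v w) = cinner \<psi> w * cinner w \<psi>" for w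
    unfolding psi(2) outer_mv cinner_smult_right ..
  have limq: "((\<lambda>t. c * Re (cinner w (E Ds t w0 *v w))) \<longlongrightarrow> c * (m * Re (cinner \<psi> w * cinner w \<psi>))) at_top" for w
  proof -
    have "((\<lambda>t. Re (cinner w (E Ds t w0 *v w))) \<longlongrightarrow> Re (cinner w ((m *\<^sub>R \<rho>d) *v w))) at_top"
      by (rule tendsto_Re[OF tendsto_q[OF m]])
    moreover have "Re (cinner w ((m *\<^sub>R \<rho>d) *v w)) = m * Re (cinner \<psi> w * cinner w \<psi>)"
      by (simp add: mat_scaleR_mv cinner_scaleR_right qrho)
    ultimately show ?thesis by (intro tendsto_mult tendsto_const) simp
  qed
  have Z: "((\<lambda>t. Re (cinner w (\<tau> t *v w))) \<longlongrightarrow> 0) at_top" if w: "cinner \<psi> w = 0" for w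
  proof (rule tendsto_sandwich[OF _ _ tendsto_const])
    show "eventually (\<lambda>t. 0 \<le> Re (cinner w (\<tau> t *v w))) at_top"
      using evpsd by (rule eventually_mono) (simp add: psd_def)
    show "eventually (\<lambda>t. Re (cinner w (\<tau> t *v w)) \<le> c * Re (cinner w (E Ds t w0 *v w))) at_top"
      using evdom by (rule eventually_mono) blast
    show "((\<lambda>t. c * Re (cinner w (E Ds t w0 *v w))) \<longlongrightarrow> 0) at_top"
      using limq[of w] w by simp
  qed
  have Bd: "\<exists>K\<ge>0. eventually (\<lambda>t. Re (cinner a (\<tau> t *v a)) \<le> K) at_top" for a
  proof -
    define L where "L = c * (m * Re (cinner \<psi> a * cinner a \<psi>))"
    have "eventually (\<lambda>t. c * Re (cinner a (E Ds t w0 *v a)) < L + 1) at_top"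
      using order_tendstoD(2)[OF limq[of a]] unfolding L_def by simp
    then have "eventually (\<lambda>t. Re (cinner a (\<tau> t *v a)) \<le> max 0 (L + 1)) at_top"
      using evdom
    proof eventually_elim
      case (elim t)
      have "Re (cinner a (\<tau> t *v a)) \<le> c * Re (cinner a (E Ds t w0 *v a))" using elim(2) by blast
      then show ?case using elim(1) by linarith
    qed
    then show ?thesis by (intro exI[of _ "max 0 (L + 1)"]) simp
  qed
  have X: "((\<lambda>t. cinner a (\<tau> t *v w)) \<longlongrightarrow> 0) at_top" if w: "cinner \<psi> w = 0" for a w
  proof -
    obtain K where K: "K \<ge> 0" "eventually (\<lambda>t. Re (cinner a (\<tau> t *v a)) \<le> K) at_top" using Bd by blast
    show ?thesis
    proof (rule Lim_null_comparison)
      show "eventually (\<lambda>t. norm (cinner a (\<tau> t *v w)) \<le> sqrt (K * Re (cinner w (\<tau> t *v w)))) at_top"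
        using K(2) evpsd
      proof eventually_elim
        case (elim t)
        have "(cmod (cinner a (\<tau> t *v w)))^2 \<le> Re (cinner a (\<tau> t *v a)) * Re (cinner w (\<tau> t *v w))"
          by (rule psd_CS[OF elim(2)])
        also have "\<dots> \<le> K * Re (cinner w (\<tau> t *v w))"
        proof (rule mult_right_mono)
          show "Re (cinner a (\<tau> t *v a)) \<le> K" by (rule elim(1))
          show "0 \<le> Re (cinner w (\<tau> t *v w))" using elim(2) unfolding psd_def by blast
        qed
        finally show ?case by (simp add: real_le_rsqrt)
      qed
      have "((\<lambda>t. sqrt (K * Re (cinner w (\<tau> t *v w)))) \<longlongrightarrow> sqrt (K * 0)) at_top"
        by (intro tendsto_real_sqrt tendsto_mult tendsto_const Z[OF w])
      then show "((\<lambda>t. sqrt (K * Re (cinner w (\<tau> t *v w)))) \<longlongrightarrow> 0) at_top" by simp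
    qed
  qed
  have X': "((\<lambda>t. cinner w (\<tau> t *v a)) \<longlongrightarrow> 0) at_top" if w: "cinner \<psi> w = 0" for a w
  proof -
    have "((\<lambda>t. cnj (cinner a (\<tau> t *v w))) \<longlongrightarrow> cnj 0) at_top"
      by (rule tendsto_cnj[OF X[OF w]])
    moreover have "eventually (\<lambda>t. cnj (cinner a (\<tau> t *v w)) = cinner w (\<tau> t *v a)) at_top"
      using evpsd
    proof (rule eventually_mono)
      fix t assume "psd (\<tau> t)"
      from psd_herm[OF this, of w a] show "cnj (cinner a (\<tau> t *v w)) = cinner w (\<tau> t *v a)" by simp
    qed
    ultimately show ?thesis by (simp add: Lim_transform_eventually)
  qed
  define e where "e i = (axis i 1 :: complex^'n)" for i
  define \<beta> where "\<beta> i = cnj (\<psi> $ i)" for i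
  define wv where "wv i = e i - \<beta> i *s \<psi>" for i
  have bet: "cinner \<psi> (e i) = \<beta> i" for i unfolding e_def \<beta>_def cinner_axis ..
  have wv0: "cinner \<psi> (wv i) = 0" for i
    unfolding wv_def cinner_diff_right cinner_smult_right bet psi(1) by simp
  have edec: "e i = \<beta> i *s \<psi> + wv i" for i unfolding wv_def by simp
  define Q where "Q t = cinner \<psi> (\<tau> t *v \<psi>)" for t
  define R where "R i j t = cnj (\<beta> i) * cinner \<psi> (\<tau> t *v wv j) + \<beta> j * cinner (wv i) (\<tau> t *v \<psi>)
      + cinner (wv i) (\<tau> t *v wv j)" for i j t
  have entry: "\<tau> t $ i $ j = cnj (\<beta> i) * \<beta> j * Q t + R i j t" for t i j
  proof -
    have "\<tau> t $ i $ j = cinner (e i) (\<tau> t *v e j)" unfolding e_def axis_entry ..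
    also have "\<dots> = cnj (\<beta> i) * \<beta> j * Q t + R i j t"
      unfolding edec[of i] edec[of j] bilin_expand Q_def R_def by (simp add: algebra_simps)
    finally show ?thesis .
  qed
  have Rlim: "((R i j) \<longlongrightarrow> 0) at_top" for i j
  proof -
    have "((\<lambda>t. cnj (\<beta> i) * cinner \<psi> (\<tau> t *v wv j) + \<beta> j * cinner (wv i) (\<tau> t *v \<psi>)
      + cinner (wv i) (\<tau> t *v wv j)) \<longlongrightarrow> cnj (\<beta> i) * 0 + \<beta> j * 0 + 0) at_top"
      by (intro tendsto_add tendsto_mult tendsto_const X X' wv0)
    then show ?thesis unfolding R_def[abs_def] by simp
  qed
  have sb: "(\<Sum>i\<in>UNIV. cnj (\<beta> i) * \<beta> i) = 1"
    using psi(1) unfolding cinner_def \<beta>_def by (simp add: mult.commute)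
  have Qeq: "Q t = 1 - (\<Sum>i\<in>UNIV. R i i t)" for t
  proof -
    have "1 = trace (\<tau> t)" using evtr by simp
    also have "\<dots> = (\<Sum>i\<in>UNIV. cnj (\<beta> i) * \<beta> i * Q t + R i i t)"
      unfolding trace_def entry ..
    also have "\<dots> = (\<Sum>i\<in>UNIV. cnj (\<beta> i) * \<beta> i) * Q t + (\<Sum>i\<in>UNIV. R i i t)"
      by (simp add: sum.distrib sum_distrib_right)
    finally show ?thesis unfolding sb by (simp add: eq_diff_eq)
  qed
  have Qlim: "(Q \<longlongrightarrow> 1) at_top"
  proof -
    have "((\<lambda>t. 1 - (\<Sum>i\<in>UNIV. R i i t)) \<longlongrightarrow> 1 - (\<Sum>i\<in>(UNIV::'n set). 0)) at_top"
      by (intro tendsto_diff tendsto_const tendsto_sum Rlim)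
    then show ?thesis unfolding Qeq[abs_def] by simp
  qed
  have "((\<lambda>t. \<tau> t) \<longlongrightarrow> \<rho>d) at_top"
  proof (rule vec_tendstoI)
    fix i
    show "((\<lambda>t. \<tau> t $ i) \<longlongrightarrow> \<rho>d $ i) at_top"
    proof (rule vec_tendstoI)
      fix j
      have "((\<lambda>t. cnj (\<beta> i) * \<beta> j * Q t + R i j t) \<longlongrightarrow> cnj (\<beta> i) * \<beta> j * 1 + 0) at_top"
        by (intro tendsto_add tendsto_mult tendsto_const Qlim Rlim)
      moreover have "cnj (\<beta> i) * \<beta> j * 1 + 0 = \<rho>d $ i $ j"
        unfolding psi(2) outer_def \<beta>_def by simp
      ultimately show "((\<lambda>t. \<tau> t $ i $ j) \<longlongrightarrow> \<rho>d $ i $ j) at_top"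
        unfolding entry by simp
    qed
  qed
  then show ?thesis unfolding \<tau>_def .
qed

end

theorem lemma3:
  fixes Ds :: "('n::finite) cmat list" and \<rho>d :: "'n cmat" and H'' :: "(complex^'n) set"
  assumes "csubspace H''"
    and "pure_state \<rho>d"
    and "cond_asymp_stable (lindblad_D Ds) \<rho>d H''"
  shows "\<exists>H'. csubspace H' \<and> H'' \<subseteq> H' \<and> invariant_densities (lindblad_D Ds) H'
             \<and> cond_asymp_stable (lindblad_D Ds) \<rho>d H'"
proof -
  interpret lsetup Ds H'' \<rho>d using assms(1,3) by unfold_locales
  show ?thesis
  proof (intro exI[of _ H'] conjI)
    show "csubspace H'" by (rule H'_csubspace)
    show "H'' \<subseteq> H'" by (rule H''_sub)
    show "invariant_densities (lindblad_D Ds) H'"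
      unfolding invariant_densities_def evol_eq using invariance by blast
    show "cond_asymp_stable (lindblad_D Ds) \<rho>d H'"
      unfolding cond_asymp_stable_def evol_eq using stability[OF assms(2)] by blast
  qed
qed


end
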